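(* Let $1\le i,j,k,l\le n$ with $i<j$, $k<l$, $i\le k$. Then in ${\boldsymbol U}_{v}(\mathfrak q_n)$: \[ \mathsf E_{j,i}\mathsf E_{k,l}=\begin{cases}\mathsf E_{k,l}\mathsf E_{j,i} & (i<j\le k<l\text{ or } i<k<l<j),\\ \mathsf E_{k,l}\mathsf E_{j,i}-\mathsf E_{j,l}\mathsf K_j\mathsf K_i^{-1} & (i=k<j<l),\\ \mathsf E_{k,l}\mathsf E_{j,i}+\mathsf E_{k,i}\mathsf K_j\mathsf K_k^{-1} & (i<k<j=l),\\ \mathsf E_{k,l}\mathsf E_{j,i}-(v-v^{-1})\mathsf E_{k,i}\mathsf E_{j,l}\mathsf K_j\mathsf K_k^{-1} & (i<k<j<l),\\ \mathsf E_{k,l}\mathsf E_{j,i}+\dfrac{\mathsf K_j\mathsf K_i^{-1}-\mathsf K_i\mathsf K_j^{-1}}{v-v^{-1}} & (i=k\text{ and } j=l).\end{cases} \]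
   Context: Let $v$ be an indeterminate. The quantum queer superalgebra ${\boldsymbol U}_{v}(\mathfrak q_n)$ is the associative superalgebra over $\mathbb Q(v)$ generated by even generators $\mathsf K_i,\mathsf K_i^{-1}$ ($1\le i\le n$), $\mathsf E_j,\mathsf F_j$ ($1\le j\le n-1$) and odd generators $\mathsf K_{\bar i}$ ($1\le i\le n$), $\mathsf E_{\bar j},\mathsf F_{\bar j}$ ($1\le j\le n-1$), subject to the following relations (indices are taken only where they make sense), where $(\epsilon_i,\alpha_j)=\delta_{i,j}-\delta_{i,j+1}$: (QQ1) $\mathsf K_i\mathsf K_i^{-1}=\mathsf K_i^{-1}\mathsf K_i=1$, $\mathsf K_i\mathsf K_j=\mathsf K_j\mathsf K_i$, $\mathsf K_i\mathsf K_{\bar j}=\mathsf K_{\bar j}\mathsf K_i$, $\mathsf K_{\bar i}\mathsf K_{\bar j}+\mathsf K_{\bar j}\mathsf K_{\bar i}=2\delta_{i,j}\frac{\mathsf K_i^2-\mathsf K_i^{-2}}{v^2-v^{-2}}$. (QQ2) $\mathsf K_i\mathsf E_j=v^{(\epsilon_i,\alpha_j)}\mathsf E_j\mathsf K_i$, $\mathsf K_i\mathsf E_{\bar j}=v^{(\epsilon_i,\alpha_j)}\mathsf E_{\bar j}\mathsf K_i$, $\mathsf K_i\mathsf F_j=v^{-(\epsilon_i,\alpha_j)}\mathsf F_j\mathsf K_i$, $\mathsf K_i\mathsf F_{\bar j}=v^{-(\epsilon_i,\alpha_j)}\mathsf F_{\bar j}\mathsf K_i$. (QQ3) $\mathsf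 K_{\bar i}\mathsf E_i-v\mathsf E_i\mathsf K_{\bar i}=\mathsf E_{\bar i}\mathsf K_i^{-1}$, $v\mathsf K_{\bar i}\mathsf E_{i-1}-\mathsf E_{i-1}\mathsf K_{\bar i}=-\mathsf K_i^{-1}\mathsf E_{\overline{i-1}}$, $\mathsf K_{\bar i}\mathsf F_i-v\mathsf F_i\mathsf K_{\bar i}=-\mathsf F_{\bar i}\mathsf K_i$, $v\mathsf K_{\bar i}\mathsf F_{i-1}-\mathsf F_{i-1}\mathsf K_{\bar i}=\mathsf K_i\mathsf F_{\overline{i-1}}$, $\mathsf K_{\bar i}\mathsf E_{\bar i}+v\mathsf E_{\bar i}\mathsf K_{\bar i}=\mathsf E_i\mathsf K_i^{-1}$, $v\mathsf K_{\bar i}\mathsf E_{\overline{i-1}}+\mathsf E_{\overline{i-1}}\mathsf K_{\bar i}=\mathsf K_i^{-1}\mathsf E_{i-1}$, $\mathsf K_{\bar i}\mathsf F_{\bar i}+v\mathsf F_{\bar i}\mathsf K_{\bar i}=\mathsf F_i\mathsf K_i$, $v\mathsf K_{\bar i}\mathsf F_{\overline{i-1}}+\mathsf F_{\overline{i-1}}\mathsf K_{\bar i}=\mathsf K_i\mathsf F_{i-1}$, and for $j\ne i,i-1$: $\mathsf K_{\bar i}\mathsf E_j=\mathsf E_j\mathsf K_{\bar i}$, $\mathsf K_{\bar i}\mathsf F_j=\mathsf F_j\mathsf K_{\bar i}$, $\mathsf K_{\bar i}\mathsf E_{\bar j}=-\mathsf E_{\bar j}\mathsf K_{\bar i}$,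 $\mathsf K_{\bar i}\mathsf F_{\bar j}=-\mathsf F_{\bar j}\mathsf K_{\bar i}$. (QQ4) $\mathsf E_i\mathsf F_j-\mathsf F_j\mathsf E_i=\delta_{i,j}\frac{\mathsf K_i\mathsf K_{i+1}^{-1}-\mathsf K_i^{-1}\mathsf K_{i+1}}{v-v^{-1}}$, $\mathsf E_{\bar i}\mathsf F_{\bar j}+\mathsf F_{\bar j}\mathsf E_{\bar i}=\delta_{i,j}\big(\frac{\mathsf K_i\mathsf K_{i+1}-\mathsf K_i^{-1}\mathsf K_{i+1}^{-1}}{v-v^{-1}}+(v-v^{-1})\mathsf K_{\bar i}\mathsf K_{\overline{i+1}}\big)$, $\mathsf E_i\mathsf F_{\bar j}-\mathsf F_{\bar j}\mathsf E_i=\delta_{i,j}(\mathsf K_{i+1}^{-1}\mathsf K_{\bar i}-\mathsf K_{\overline{i+1}}\mathsf K_i^{-1})$, $\mathsf E_{\bar i}\mathsf F_j-\mathsf F_j\mathsf E_{\bar i}=\delta_{i,j}(\mathsf K_{i+1}\mathsf K_{\bar i}-\mathsf K_{\overline{i+1}}\mathsf K_i)$. (QQ5) $\mathsf E_{\bar i}^2=-\frac{v-v^{-1}}{v+v^{-1}}\mathsf E_i^2$, $\mathsf F_{\bar i}^2=\frac{v-v^{-1}}{v+v^{-1}}\mathsf F_i^2$; for $|i-j|\ne1$: $\mathsf E_i\mathsf E_{\bar j}=\mathsf E_{\bar j}\mathsf E_i$, $\mathsf F_i\mathsf F_{\bar j}=\mathsf F_{\bar j}\mathsf F_i$; for $|i-j|>1$: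 $\mathsf E_i\mathsf E_j=\mathsf E_j\mathsf E_i$, $\mathsf F_i\mathsf F_j=\mathsf F_j\mathsf F_i$, $\mathsf E_{\bar i}\mathsf E_{\bar j}=-\mathsf E_{\bar j}\mathsf E_{\bar i}$, $\mathsf F_{\bar i}\mathsf F_{\bar j}=-\mathsf F_{\bar j}\mathsf F_{\bar i}$; $\mathsf E_i\mathsf E_{i+1}-v\mathsf E_{i+1}\mathsf E_i=\mathsf E_{\bar i}\mathsf E_{\overline{i+1}}+v\mathsf E_{\overline{i+1}}\mathsf E_{\bar i}$, $\mathsf E_i\mathsf E_{\overline{i+1}}-v\mathsf E_{\overline{i+1}}\mathsf E_i=\mathsf E_{\bar i}\mathsf E_{i+1}-v\mathsf E_{i+1}\mathsf E_{\bar i}$, $\mathsf F_i\mathsf F_{i+1}-v\mathsf F_{i+1}\mathsf F_i=-(\mathsf F_{\bar i}\mathsf F_{\overline{i+1}}+v\mathsf F_{\overline{i+1}}\mathsf F_{\bar i})$, $\mathsf F_i\mathsf F_{\overline{i+1}}-v\mathsf F_{\overline{i+1}}\mathsf F_i=\mathsf F_{\bar i}\mathsf F_{i+1}-v\mathsf F_{i+1}\mathsf F_{\bar i}$. (QQ6) for $|i-j|=1$: $\mathsf E_i^2X-(v+v^{-1})\mathsf E_iX\mathsf E_i+X\mathsf E_i^2=0$ for $X\in\{\mathsf E_j,\mathsf E_{\bar j}\}$ and $\mathsf F_i^2Y-(v+v^{-1})\mathsf F_iY\mathsf F_i+Y\mathsf F_i^2=0$ for $Y\in\{\mathsf F_j,\mathsf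 F_{\bar j}\}$. Quantum root vectors: for $1\le i\le n-1$ put $\mathsf E_{i,i+1}=\mathsf E_i$, $\overline{\mathsf E}_{i,i+1}=\mathsf E_{\bar i}$, $\mathsf E_{i+1,i}=\mathsf F_i$, $\overline{\mathsf E}_{i+1,i}=\mathsf F_{\bar i}$, and recursively for $i+1<j\le n$: $\mathsf E_{i,j}=-\mathsf E_{i,j-1}\mathsf E_{j-1}+v^{-1}\mathsf E_{j-1}\mathsf E_{i,j-1}$, $\overline{\mathsf E}_{i,j}=-\mathsf E_{i,j-1}\mathsf E_{\overline{j-1}}+v^{-1}\mathsf E_{\overline{j-1}}\mathsf E_{i,j-1}$, $\mathsf E_{j,i}=-\mathsf F_{j-1}\mathsf E_{j-1,i}+v\mathsf E_{j-1,i}\mathsf F_{j-1}$, $\overline{\mathsf E}_{j,i}=-\mathsf F_{\overline{j-1}}\mathsf E_{j-1,i}+v\mathsf E_{j-1,i}\mathsf F_{\overline{j-1}}$. *)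

theory Defs
  imports "HOL-Computational_Algebra.Polynomial" "HOL-Computational_Algebra.Fraction_Field"
begin

type_synonym Qv = "rat poly fract"

definition vv :: Qv where "vv = Fract [:0, 1:] 1"

definition Qv_algebra_hom :: "(Qv \<Rightarrow> 'a::ring_1) \<Rightarrow> bool" where
  "Qv_algebra_hom phi \<longleftrightarrow>
     phi 1 = 1 \<and> (\<forall>x y. phi (x + y) = phi x + phi y) \<and> (\<forall>x y. phi (x * y) = phi x * phi y)
     \<and> (\<forall>x a. phi x * a = a * phi x)"

text \<open>v^{(epsilon_i, alpha_j)} where (epsilon_i,alpha_j) = delta_{i,j} - delta_{i,j+1}.\<close>
definition vpair :: "nat \<Rightarrow> nat \<Rightarrow> Qv" where
  "vpair i j = (if i = j then vv else if i = j + 1 then inverse vv else 1)"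

text \<open>Elements K, Kinv, Kbar (indices 1..n), E, Ebar, F, Fbar (indices 1..n-1) of a Q(v)-algebra
  satisfying the defining relations (QQ1)-(QQ6) of U_v(q_n).\<close>
definition qq_rels ::
  "nat \<Rightarrow> (Qv \<Rightarrow> 'a::ring_1) \<Rightarrow> (nat \<Rightarrow> 'a) \<Rightarrow> (nat \<Rightarrow> 'a) \<Rightarrow> (nat \<Rightarrow> 'a)
    \<Rightarrow> (nat \<Rightarrow> 'a) \<Rightarrow> (nat \<Rightarrow> 'a) \<Rightarrow> (nat \<Rightarrow> 'a) \<Rightarrow> (nat \<Rightarrow> 'a) \<Rightarrow> bool" where
  "qq_rels n phi K Ki Kb E Eb F Fb \<longleftrightarrow>
   \<comment> \<open>QQ1\<close>
   (\<forall>i\<in>{1..n}. K i * Ki i = 1 \<and> Ki i * K i = 1) \<and>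
   (\<forall>i\<in>{1..n}. \<forall>j\<in>{1..n}. K i * K j = K j * K i \<and> K i * Kb j = Kb j * K i \<and>
      Kb i * Kb j + Kb j * Kb i =
        (if i = j then phi (2 / (vv^2 - inverse vv ^ 2)) * (K i ^ 2 - Ki i ^ 2) else 0)) \<and>
   \<comment> \<open>QQ2\<close>
   (\<forall>i\<in>{1..n}. \<forall>j\<in>{1..n-1}.
      K i * E j = phi (vpair i j) * E j * K i \<and> K i * Eb j = phi (vpair i j) * Eb j * K i \<and>
      K i * F j = phi (inverse (vpair i j)) * F j * K i \<and>
      K i * Fb j = phi (inverse (vpair i j)) * Fb j * K i) \<and>
   \<comment> \<open>QQ3\<close>
   (\<forall>i\<in>{1..n}.
      (i \<le> n - 1 \<longrightarrow>
         Kb i * E i - phi vv * E i * Kb i = Eb i * Ki i \<and>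
         Kb i * F i - phi vv * F i * Kb i = - (Fb i * K i) \<and>
         Kb i * Eb i + phi vv * Eb i * Kb i = E i * Ki i \<and>
         Kb i * Fb i + phi vv * Fb i * Kb i = F i * K i) \<and>
      (2 \<le> i \<longrightarrow>
         phi vv * Kb i * E (i - 1) - E (i - 1) * Kb i = - (Ki i * Eb (i - 1)) \<and>
         phi vv * Kb i * F (i - 1) - F (i - 1) * Kb i = K i * Fb (i - 1) \<and>
         phi vv * Kb i * Eb (i - 1) + Eb (i - 1) * Kb i = Ki i * E (i - 1) \<and>
         phi vv * Kb i * Fb (i - 1) + Fb (i - 1) * Kb i = K i * F (i - 1)) \<and>
      (\<forall>j\<in>{1..n-1}. j \<noteq> i \<and> j \<noteq> i - 1 \<longrightarrow>
         Kb i * E j = E j * Kb i \<and> Kb i * F j = F j * Kb i \<and>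
         Kb i * Eb j = - (Eb j * Kb i) \<and> Kb i * Fb j = - (Fb j * Kb i))) \<and>
   \<comment> \<open>QQ4\<close>
   (\<forall>i\<in>{1..n-1}. \<forall>j\<in>{1..n-1}.
      E i * F j - F j * E i =
        (if i = j then phi (inverse (vv - inverse vv)) * (K i * Ki (i+1) - Ki i * K (i+1)) else 0) \<and>
      Eb i * Fb j + Fb j * Eb i =
        (if i = j then phi (inverse (vv - inverse vv)) * (K i * K (i+1) - Ki i * Ki (i+1))
                       + phi (vv - inverse vv) * Kb i * Kb (i+1) else 0) \<and>
      E i * Fb j - Fb j * E i = (if i = j then Ki (i+1) * Kb i - Kb (i+1) * Ki i else 0) \<and>
      Eb i * F j - F j * Eb i = (if i = j then K (i+1) * Kb i - Kb (i+1) * K i else 0)) \<and>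
   \<comment> \<open>QQ5\<close>
   (\<forall>i\<in>{1..n-1}.
      Eb i ^ 2 = - (phi ((vv - inverse vv) / (vv + inverse vv)) * E i ^ 2) \<and>
      Fb i ^ 2 = phi ((vv - inverse vv) / (vv + inverse vv)) * F i ^ 2) \<and>
   (\<forall>i\<in>{1..n-1}. \<forall>j\<in>{1..n-1}.
      (\<not> (i = j + 1 \<or> j = i + 1) \<longrightarrow> E i * Eb j = Eb j * E i \<and> F i * Fb j = Fb j * F i) \<and>
      (i + 1 < j \<or> j + 1 < i \<longrightarrow>
         E i * E j = E j * E i \<and> F i * F j = F j * F i \<and>
         Eb i * Eb j = - (Eb j * Eb i) \<and> Fb i * Fb j = - (Fb j * Fb i))) \<and>
   (\<forall>i. 1 \<le> i \<and> i + 1 \<le> n - 1 \<longrightarrow>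
      E i * E (i+1) - phi vv * E (i+1) * E i = Eb i * Eb (i+1) + phi vv * Eb (i+1) * Eb i \<and>
      E i * Eb (i+1) - phi vv * Eb (i+1) * E i = Eb i * E (i+1) - phi vv * E (i+1) * Eb i \<and>
      F i * F (i+1) - phi vv * F (i+1) * F i = - (Fb i * Fb (i+1) + phi vv * Fb (i+1) * Fb i) \<and>
      F i * Fb (i+1) - phi vv * Fb (i+1) * F i = Fb i * F (i+1) - phi vv * F (i+1) * Fb i) \<and>
   \<comment> \<open>QQ6\<close>
   (\<forall>i\<in>{1..n-1}. \<forall>j\<in>{1..n-1}. (i = j + 1 \<or> j = i + 1) \<longrightarrow>
      (\<forall>X\<in>{E j, Eb j}. E i ^ 2 * X - phi (vv + inverse vv) * E i * X * E i + X * E i ^ 2 = 0) \<and>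
      (\<forall>Y\<in>{F j, Fb j}. F i ^ 2 * Y - phi (vv + inverse vv) * F i * Y * F i + Y * F i ^ 2 = 0))"

text \<open>Quantum root vectors. Eup phi E i d = E_{i,i+1+d}; Elow phi F i d = E_{i+1+d,i}.\<close>
primrec Eup :: "(Qv \<Rightarrow> 'a::ring_1) \<Rightarrow> (nat \<Rightarrow> 'a) \<Rightarrow> nat \<Rightarrow> nat \<Rightarrow> 'a" where
  "Eup phi E i 0 = E i"
| "Eup phi E i (Suc d) = - (Eup phi E i d * E (i + 1 + d)) + phi (inverse vv) * E (i + 1 + d) * Eup phi E i d"

primrec Elow :: "(Qv \<Rightarrow> 'a::ring_1) \<Rightarrow> (nat \<Rightarrow> 'a) \<Rightarrow> nat \<Rightarrow> nat \<Rightarrow> 'a" where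
  "Elow phi F i 0 = F i"
| "Elow phi F i (Suc d) = - (F (i + 1 + d) * Elow phi F i d) + phi vv * Elow phi F i d * F (i + 1 + d)"

text \<open>Eroot a b = E_{a,b} for a \<noteq> b.\<close>
definition Eroot :: "(Qv \<Rightarrow> 'a::ring_1) \<Rightarrow> (nat \<Rightarrow> 'a) \<Rightarrow> (nat \<Rightarrow> 'a) \<Rightarrow> nat \<Rightarrow> nat \<Rightarrow> 'a" where
  "Eroot phi E F a b = (if a < b then Eup phi E a (b - a - 1) else Elow phi F b (a - b - 1))"

end

theory Submission
  imports Defs
begin

definition qc :: "(Qv \<Rightarrow> 'a::ring_1) \<Rightarrow> Qv \<Rightarrow> 'a \<Rightarrow> 'a \<Rightarrow> bool" where
  "qc phi p A B \<longleftrightarrow> A * B = phi p * B * A"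

locale qq =
  fixes n :: nat and phi :: "Qv \<Rightarrow> 'a::ring_1" and K Ki Kb E Eb F Fb :: "nat \<Rightarrow> 'a"
  assumes alg: "Qv_algebra_hom phi" and rels: "qq_rels n phi K Ki Kb E Eb F Fb"
begin

lemma phi_1[simp]: "phi 1 = 1" using alg unfolding Qv_algebra_hom_def by blast
lemma phi_add: "phi (x + y) = phi x + phi y" using alg unfolding Qv_algebra_hom_def by blast
lemma phi_mult: "phi (x * y) = phi x * phi y" using alg unfolding Qv_algebra_hom_def by blast
lemma phi_central: "phi x * a = a * phi x" using alg unfolding Qv_algebra_hom_def by blast
lemma phi_0[simp]: "phi 0 = 0" using phi_add[of 0 0] by simp
lemma phi_uminus: "phi (- x) = - phi x" using phi_add[of x "-x"] by (simp add: add_eq_0_iff2)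
lemma phi_diff: "phi (x - y) = phi x - phi y" using phi_add[of x "-y"] phi_uminus by simp
lemma phi_inv: "x \<noteq> 0 \<Longrightarrow> phi (inverse x) * phi x = 1" by (metis phi_mult phi_1 left_inverse)


lemma phi_mm: "phi x * (phi y * b) = phi (x*y) * b" by (metis phi_mult mult.assoc)
lemma phi_cl: "NO_MATCH (phi y) a \<Longrightarrow> a * phi x = phi x * a" by (simp add: phi_central)
lemma phi_cl2: "NO_MATCH (phi y) a \<Longrightarrow> a * (phi x * b) = phi x * (a * b)"
  by (metis mult.assoc phi_central)
lemma phi_neg: "- (phi x * b) = phi (-x) * b" by (simp add: phi_uminus)

lemma phi_m1: "phi (-1) * b = - b" by (simp add: phi_uminus)
lemma vvc1: "vv * (x * inverse vv) = x" by (simp add: Defs.vv_def field_simps Zero_fract_def eq_fract)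
lemma vvc2: "inverse vv * (x * vv) = x" by (simp add: Defs.vv_def field_simps Zero_fract_def eq_fract)
lemma vvc3: "vv * (inverse vv * x) = x" by (simp add: Defs.vv_def field_simps Zero_fract_def eq_fract)
lemma vvc4: "inverse vv * (vv * x) = x" by (simp add: Defs.vv_def field_simps Zero_fract_def eq_fract)

lemmas nsimps = algebra_simps phi_mm phi_cl phi_cl2 phi_mult[symmetric] phi_neg phi_m1 vvc1 vvc2 vvc3 vvc4


lemma qc_use: "qc phi p A B \<Longrightarrow> A * B = phi p * (B * A)"
  by (simp add: qc_def mult.assoc)
lemma qc_use2: "qc phi p A B \<Longrightarrow> A * (B * z) = phi p * (B * (A * z))"
  by (simp add: qc_def mult.assoc[symmetric])

lemma qc_mr: "qc phi p A B \<Longrightarrow> qc phi q A C \<Longrightarrow> qc phi (p*q) A (B*C)"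
proof -
  assume h1: "qc phi p A B" and h2: "qc phi q A C"
  have "A*(B*C) = phi p * (B * (A * C))" using qc_use2[OF h1] .
  also have "\<dots> = phi (p*q) * (B*C) * A" using qc_use[OF h2] by (simp add: nsimps)
  finally show ?thesis by (simp add: qc_def)
qed

lemma qc_ml: "qc phi p A C \<Longrightarrow> qc phi q B C \<Longrightarrow> qc phi (p*q) (A*B) C"
proof -
  assume h1: "qc phi p A C" and h2: "qc phi q B C"
  have "(A*B)*C = A * (phi q * (C * B))" using qc_use[OF h2] by (simp add: mult.assoc)
  also have "\<dots> = phi q * (A * (C * B))" by (simp add: nsimps)
  also have "\<dots> = phi (p*q) * (C * (A * B))" using qc_use2[OF h1] by (simp add: nsimps)
  finally show ?thesis by (simp add: qc_def mult.assoc)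
qed

lemma qc_add_r: "qc phi p A B \<Longrightarrow> qc phi p A C \<Longrightarrow> qc phi p A (B + C)"
  by (simp add: qc_def algebra_simps)
lemma qc_add_l: "qc phi p A C \<Longrightarrow> qc phi p B C \<Longrightarrow> qc phi p (A + B) C"
  by (simp add: qc_def algebra_simps)
lemma qc_neg_r: "qc phi p A B \<Longrightarrow> qc phi p A (- B)"
  by (simp add: qc_def algebra_simps)
lemma qc_neg_l: "qc phi p A B \<Longrightarrow> qc phi p (- A) B"
  by (simp add: qc_def algebra_simps)
lemma qc_diff_r: "qc phi p A B \<Longrightarrow> qc phi p A C \<Longrightarrow> qc phi p A (B - C)"
  by (simp add: qc_def algebra_simps)
lemma qc_diff_l: "qc phi p A C \<Longrightarrow> qc phi p B C \<Longrightarrow> qc phi p (A - B) C"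
  by (simp add: qc_def algebra_simps)
lemma qc_sc_r: "qc phi p A B \<Longrightarrow> qc phi p A (phi x * B)"
  unfolding qc_def by (simp add: nsimps)
lemma qc_sc_l: "qc phi p A B \<Longrightarrow> qc phi p (phi x * A) B"
  unfolding qc_def by (simp add: nsimps)
lemma qc_one_r: "qc phi 1 A 1" by (simp add: qc_def)
lemma qc_one_l: "qc phi 1 1 A" by (simp add: qc_def)
lemma qc_cong: "qc phi p A B \<Longrightarrow> p = q \<Longrightarrow> qc phi q A B" by simp

lemma qc_inv_l:
  assumes h: "qc phi p A B" and a1: "A * A' = 1" and a2: "A' * A = 1" and p: "p \<noteq> 0"
  shows "qc phi (inverse p) A' B"
proof -
  have ba: "B * A = phi (inverse p) * (A * B)"
    using qc_use[OF h] phi_inv[OF p] by (simp add: nsimps)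
  have "A' * B = A' * (B * A) * A'" by (simp add: mult.assoc a1)
  also have "\<dots> = phi (inverse p) * ((A' * A) * B * A')" by (simp add: ba nsimps)
  finally show ?thesis by (simp add: qc_def a2 nsimps)
qed

lemma qc_inv_r:
  assumes h: "qc phi p A B" and a1: "B * B' = 1" and a2: "B' * B = 1" and p: "p \<noteq> 0"
  shows "qc phi (inverse p) A B'"
proof -
  have "B' * A = B' * (A * B) * B'" by (simp add: mult.assoc a1)
  also have "\<dots> = phi p * (B' * B * A * B')" by (simp add: qc_use[OF h] nsimps)
  finally have "B' * A = phi p * (A * B')" by (simp add: a2 nsimps)
  hence "phi (inverse p) * (B' * A) = A * B'" using phi_inv[OF p] by (simp add: nsimps)
  thus ?thesis by (simp add: qc_def nsimps)
qed

lemma qc_sym: assumes h: "qc phi p A B" and p: "p \<noteq> 0" shows "qc phi (inverse p) B A"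
proof -
  have "phi (inverse p) * (A * B) = (phi (inverse p) * phi p) * (B * A)"
    using qc_use[OF h] by (simp add: mult.assoc)
  thus ?thesis using phi_inv[OF p] by (simp add: qc_def mult.assoc)
qed


lemma rel_KKi: "1 \<le> a \<Longrightarrow> a \<le> n \<Longrightarrow> K a * Ki a = 1"
  using rels unfolding qq_rels_def by auto
lemma rel_KiK: "1 \<le> a \<Longrightarrow> a \<le> n \<Longrightarrow> Ki a * K a = 1"
  using rels unfolding qq_rels_def by auto
lemma rel_KK: "1 \<le> a \<Longrightarrow> a \<le> n \<Longrightarrow> 1 \<le> b \<Longrightarrow> b \<le> n \<Longrightarrow> qc phi 1 (K a) (K b)"
proof -
  assume "1 \<le> a" "a \<le> n" "1 \<le> b" "b \<le> n"
  hence "K a * K b = K b * K a" using rels unfolding qq_rels_def by (meson atLeastAtMost_iff)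
  thus ?thesis by (simp add: qc_def)
qed
lemma rel_KE: "1 \<le> a \<Longrightarrow> a \<le> n \<Longrightarrow> 1 \<le> b \<Longrightarrow> b \<le> n - 1 \<Longrightarrow> qc phi (vpair a b) (K a) (E b)"
  unfolding qc_def using rels unfolding qq_rels_def by (meson atLeastAtMost_iff)
lemma rel_KF: "1 \<le> a \<Longrightarrow> a \<le> n \<Longrightarrow> 1 \<le> b \<Longrightarrow> b \<le> n - 1 \<Longrightarrow> qc phi (inverse (vpair a b)) (K a) (F b)"
  unfolding qc_def using rels unfolding qq_rels_def by (meson atLeastAtMost_iff)
lemma rel_EF_ne: "1 \<le> a \<Longrightarrow> a \<le> n - 1 \<Longrightarrow> 1 \<le> b \<Longrightarrow> b \<le> n - 1 \<Longrightarrow> a \<noteq> b \<Longrightarrow> qc phi 1 (E a) (F b)"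
proof -
  assume h: "1 \<le> a" "a \<le> n - 1" "1 \<le> b" "b \<le> n - 1" "a \<noteq> b"
  have "E a * F b - F b * E a = (if a = b then phi (inverse (vv - inverse vv)) * (K a * Ki (a+1) - Ki a * K (a+1)) else 0)"
    using rels h(1-4) unfolding qq_rels_def by (meson atLeastAtMost_iff)
  thus ?thesis using h(5) by (simp add: qc_def)
qed
lemma rel_EF_eq: "1 \<le> a \<Longrightarrow> a \<le> n - 1 \<Longrightarrow>
   E a * F a - F a * E a = phi (inverse (vv - inverse vv)) * (K a * Ki (a+1) - Ki a * K (a+1))"
proof -
  assume h: "1 \<le> a" "a \<le> n - 1"
  note all = rels[unfolded qq_rels_def, THEN conjunct2, THEN conjunct2, THEN conjunct2, THEN conjunct2, THEN conjunct1]
  have "a \<in> {1..n-1}" using h by simp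
  from all[rule_format, OF this this, THEN conjunct1] show ?thesis by simp
qed
lemma rel_EE: "1 \<le> a \<Longrightarrow> a \<le> n - 1 \<Longrightarrow> 1 \<le> b \<Longrightarrow> b \<le> n - 1 \<Longrightarrow> a + 1 < b \<or> b + 1 < a \<Longrightarrow> qc phi 1 (E a) (E b)"
proof -
  assume h: "1 \<le> a" "a \<le> n - 1" "1 \<le> b" "b \<le> n - 1" "a + 1 < b \<or> b + 1 < a"
  have "E a * E b = E b * E a" using rels h unfolding qq_rels_def by (meson atLeastAtMost_iff)
  thus ?thesis by (simp add: qc_def)
qed
lemma rel_FF: "1 \<le> a \<Longrightarrow> a \<le> n - 1 \<Longrightarrow> 1 \<le> b \<Longrightarrow> b \<le> n - 1 \<Longrightarrow> a + 1 < b \<or> b + 1 < a \<Longrightarrow> qc phi 1 (F a) (F b)"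
proof -
  assume h: "1 \<le> a" "a \<le> n - 1" "1 \<le> b" "b \<le> n - 1" "a + 1 < b \<or> b + 1 < a"
  have "F a * F b = F b * F a" using rels h unfolding qq_rels_def by (meson atLeastAtMost_iff)
  thus ?thesis by (simp add: qc_def)
qed

end

lemma vv_nz[simp]: "vv \<noteq> 0"
  by (simp add: vv_def Zero_fract_def eq_fract)
lemma vv_sq: "vv * vv \<noteq> 1"
  by (simp add: vv_def eq_fract One_fract_def one_pCons)
lemma vv_inv_ne: "vv - inverse vv \<noteq> 0"
proof
  assume "vv - inverse vv = 0"
  hence "vv * vv = inverse vv * vv" by simp
  thus False using vv_sq by simp
qed
lemma vv_sq2: "vv * vv - 1 \<noteq> 0" using vv_sq by simp
lemma qv1: "inverse (vv - inverse vv) * inverse vv * inverse vv - inverse (vv - inverse vv) = - inverse vv"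
proof -
  have a: "inverse vv * inverse vv - 1 = - (inverse vv * (vv - inverse vv))"
    using vv_nz by (simp add: algebra_simps)
  have "inverse (vv - inverse vv) * inverse vv * inverse vv - inverse (vv - inverse vv)
      = inverse (vv - inverse vv) * (inverse vv * inverse vv - 1)" by (simp add: algebra_simps)
  also have "\<dots> = - inverse vv * ((vv - inverse vv) * inverse (vv - inverse vv))" unfolding a by simp
  also have "\<dots> = - inverse vv" using vv_inv_ne by simp
  finally show ?thesis .
qed
lemma qv2: "inverse (vv - inverse vv) - inverse (vv - inverse vv) * inverse vv * vv = 0"
  by simp
lemma qv3: "inverse (vv - inverse vv) * vv - inverse (vv - inverse vv) * inverse vv = 1"
proof -
  have "inverse (vv - inverse vv) * vv - inverse (vv - inverse vv) * inverse vv
     = (vv - inverse vv) * inverse (vv - inverse vv)" by (simp add: algebra_simps)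
  thus ?thesis using vv_inv_ne by simp
qed
lemma vpair_nz[simp]: "vpair a b \<noteq> 0" by (simp add: vpair_def)

definition wX :: "nat \<Rightarrow> nat \<Rightarrow> nat \<Rightarrow> Qv" where
  "wX a k l = (if a = k then vv else 1) * (if a = l then inverse vv else 1)"
definition wY :: "nat \<Rightarrow> nat \<Rightarrow> nat \<Rightarrow> Qv" where
  "wY a j i = (if a = i then inverse vv else 1) * (if a = j then vv else 1)"
lemma wX_nz[simp]: "wX a k l \<noteq> 0" by (simp add: wX_def)
lemma wY_nz[simp]: "wY a j i \<noteq> 0" by (simp add: wY_def)

context qq begin

lemma qc_KiE: "1 \<le> a \<Longrightarrow> a \<le> n \<Longrightarrow> 1 \<le> b \<Longrightarrow> b \<le> n - 1 \<Longrightarrow> qc phi (inverse (vpair a b)) (Ki a) (E b)"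
  by (rule qc_inv_l[OF rel_KE rel_KKi rel_KiK]) auto
lemma qc_KiF: "1 \<le> a \<Longrightarrow> a \<le> n \<Longrightarrow> 1 \<le> b \<Longrightarrow> b \<le> n - 1 \<Longrightarrow> qc phi (vpair a b) (Ki a) (F b)"
  using qc_inv_l[OF rel_KF rel_KKi rel_KiK] by auto
lemma qc_KKi: "1 \<le> a \<Longrightarrow> a \<le> n \<Longrightarrow> 1 \<le> b \<Longrightarrow> b \<le> n \<Longrightarrow> qc phi 1 (K a) (Ki b)"
  using qc_inv_r[OF rel_KK rel_KKi rel_KiK] by auto
lemma qc_KiK: "1 \<le> a \<Longrightarrow> a \<le> n \<Longrightarrow> 1 \<le> b \<Longrightarrow> b \<le> n \<Longrightarrow> qc phi 1 (Ki a) (K b)"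
  using qc_inv_l[OF rel_KK rel_KKi rel_KiK] by auto
lemma qc_KiKi: "1 \<le> a \<Longrightarrow> a \<le> n \<Longrightarrow> 1 \<le> b \<Longrightarrow> b \<le> n \<Longrightarrow> qc phi 1 (Ki a) (Ki b)"
  using qc_inv_l[OF qc_KKi rel_KKi rel_KiK] by auto

definition Xu :: "nat \<Rightarrow> nat \<Rightarrow> 'a" where "Xu k l = Eup phi E k (l - k - 1)"
definition Yl :: "nat \<Rightarrow> nat \<Rightarrow> 'a" where "Yl j i = Elow phi F i (j - i - 1)"

lemma Xu_base: "Xu k (Suc k) = E k" by (simp add: Xu_def)
lemma Yl_base: "Yl (Suc i) i = F i" by (simp add: Yl_def)
lemma Xu_step: "k < l \<Longrightarrow> Xu k (Suc l) = - (Xu k l * E l) + phi (inverse vv) * (E l * Xu k l)"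
proof -
  assume "k < l"
  then obtain d where d: "l = k + 1 + d" by (metis add_Suc_right less_iff_Suc_add add.commute plus_1_eq_Suc add_Suc)
  have "Suc l - k - 1 = Suc d" using d by simp
  thus ?thesis using d by (simp add: Xu_def mult.assoc)
qed
lemma Yl_step: "i < j \<Longrightarrow> Yl (Suc j) i = - (F j * Yl j i) + phi vv * (Yl j i * F j)"
proof -
  assume "i < j"
  then obtain d where d: "j = i + 1 + d" by (metis add_Suc_right less_iff_Suc_add add.commute plus_1_eq_Suc add_Suc)
  have "Suc j - i - 1 = Suc d" using d by simp
  thus ?thesis using d by (simp add: Yl_def mult.assoc)
qed

lemma KX: "1 \<le> a \<Longrightarrow> a \<le> n \<Longrightarrow> 1 \<le> k \<Longrightarrow> k < l \<Longrightarrow> l \<le> n \<Longrightarrow> qc phi (wX a k l) (K a) (Xu k l)"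
proof (induction l)
  case 0 then show ?case by simp
next
  case (Suc l)
  show ?case
  proof (cases "l = k")
    case True
    have "qc phi (vpair a k) (K a) (E k)" using Suc True by (intro rel_KE) auto
    moreover have "vpair a k = wX a k (Suc k)" by (auto simp: vpair_def wX_def)
    ultimately show ?thesis using True by (simp add: Xu_base)
  next
    case False
    hence kl: "k < l" using Suc by simp
    have ih: "qc phi (wX a k l) (K a) (Xu k l)" using Suc kl by simp
    have ke: "qc phi (vpair a l) (K a) (E l)" using Suc kl by (intro rel_KE) auto
    have w: "wX a k l * vpair a l = wX a k (Suc l)" using kl by (auto simp: vpair_def wX_def)
    have "qc phi (wX a k (Suc l)) (K a) (- (Xu k l * E l) + phi (inverse vv) * (E l * Xu k l))"
      by (rule qc_add_r[OF qc_neg_r[OF qc_cong[OF qc_mr[OF ih ke]]] qc_sc_r[OF qc_cong[OF qc_mr[OF ke ih]]]])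
         (use w in \<open>simp_all add: mult.commute\<close>)
    thus ?thesis by (simp add: Xu_step[OF kl])
  qed
qed

lemma KY: "1 \<le> a \<Longrightarrow> a \<le> n \<Longrightarrow> 1 \<le> i \<Longrightarrow> i < j \<Longrightarrow> j \<le> n \<Longrightarrow> qc phi (wY a j i) (K a) (Yl j i)"
proof (induction j)
  case 0 then show ?case by simp
next
  case (Suc j)
  show ?case
  proof (cases "j = i")
    case True
    have "qc phi (inverse (vpair a i)) (K a) (F i)" using Suc True by (intro rel_KF) auto
    moreover have "inverse (vpair a i) = wY a (Suc i) i" by (auto simp: vpair_def wY_def)
    ultimately show ?thesis using True by (simp add: Yl_base)
  next
    case False
    hence kl: "i < j" using Suc by simp
    have ih: "qc phi (wY a j i) (K a) (Yl j i)" using Suc kl by simp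
    have ke: "qc phi (inverse (vpair a j)) (K a) (F j)" using Suc kl by (intro rel_KF) auto
    have w: "wY a j i * inverse (vpair a j) = wY a (Suc j) i" using kl by (auto simp: vpair_def wY_def)
    have "qc phi (wY a (Suc j) i) (K a) (- (F j * Yl j i) + phi vv * (Yl j i * F j))"
      by (rule qc_add_r[OF qc_neg_r[OF qc_cong[OF qc_mr[OF ke ih]]] qc_sc_r[OF qc_cong[OF qc_mr[OF ih ke]]]])
         (use w in \<open>simp_all add: mult.commute\<close>)
    thus ?thesis by (simp add: Yl_step[OF kl])
  qed
qed

lemma KiX: "1 \<le> a \<Longrightarrow> a \<le> n \<Longrightarrow> 1 \<le> k \<Longrightarrow> k < l \<Longrightarrow> l \<le> n \<Longrightarrow> qc phi (inverse (wX a k l)) (Ki a) (Xu k l)"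
  by (rule qc_inv_l[OF KX rel_KKi rel_KiK]) auto
lemma KiY: "1 \<le> a \<Longrightarrow> a \<le> n \<Longrightarrow> 1 \<le> i \<Longrightarrow> i < j \<Longrightarrow> j \<le> n \<Longrightarrow> qc phi (inverse (wY a j i)) (Ki a) (Yl j i)"
  by (rule qc_inv_l[OF KY rel_KKi rel_KiK]) auto

lemma C1: "1 \<le> a \<Longrightarrow> a \<le> n - 1 \<Longrightarrow> 1 \<le> k \<Longrightarrow> k < l \<Longrightarrow> l \<le> n \<Longrightarrow> a < k \<or> l \<le> a \<Longrightarrow> qc phi 1 (F a) (Xu k l)"
proof (induction l)
  case 0 then show ?case by simp
next
  case (Suc l)
  show ?case
  proof (cases "l = k")
    case True
    have "qc phi 1 (E k) (F a)" using Suc True by (intro rel_EF_ne) auto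
    from qc_sym[OF this] show ?thesis using True by (simp add: Xu_base)
  next
    case False
    hence kl: "k < l" using Suc by simp
    have ih: "qc phi 1 (F a) (Xu k l)" using Suc.prems kl by (intro Suc.IH) auto
    have "qc phi 1 (E l) (F a)" using Suc kl by (intro rel_EF_ne) auto
    from qc_sym[OF this] have ke: "qc phi 1 (F a) (E l)" by simp
    have "qc phi 1 (F a) (- (Xu k l * E l) + phi (inverse vv) * (E l * Xu k l))"
      by (rule qc_add_r[OF qc_neg_r[OF qc_cong[OF qc_mr[OF ih ke]]] qc_sc_r[OF qc_cong[OF qc_mr[OF ke ih]]]]) simp_all
    thus ?thesis by (simp add: Xu_step[OF kl])
  qed
qed

lemma C3: "1 \<le> b \<Longrightarrow> b \<le> n - 1 \<Longrightarrow> 1 \<le> k \<Longrightarrow> k < l \<Longrightarrow> l \<le> n \<Longrightarrow> b + 1 < k \<or> l < b \<Longrightarrow> qc phi 1 (E b) (Xu k l)"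
proof (induction l)
  case 0 then show ?case by simp
next
  case (Suc l)
  show ?case
  proof (cases "l = k")
    case True
    have "qc phi 1 (E b) (E k)" using Suc True by (intro rel_EE) auto
    then show ?thesis using True by (simp add: Xu_base)
  next
    case False
    hence kl: "k < l" using Suc by simp
    have ih: "qc phi 1 (E b) (Xu k l)" using Suc.prems kl by (intro Suc.IH) auto
    have ke: "qc phi 1 (E b) (E l)" using Suc kl by (intro rel_EE) auto
    have "qc phi 1 (E b) (- (Xu k l * E l) + phi (inverse vv) * (E l * Xu k l))"
      by (rule qc_add_r[OF qc_neg_r[OF qc_cong[OF qc_mr[OF ih ke]]] qc_sc_r[OF qc_cong[OF qc_mr[OF ke ih]]]]) simp_all
    thus ?thesis by (simp add: Xu_step[OF kl])
  qed
qed

lemma C2: "1 \<le> b \<Longrightarrow> b \<le> n - 1 \<Longrightarrow> 1 \<le> i \<Longrightarrow> i < j \<Longrightarrow> j \<le> n \<Longrightarrow> b < i \<or> j \<le> b \<Longrightarrow> qc phi 1 (E b) (Yl j i)"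
proof (induction j)
  case 0 then show ?case by simp
next
  case (Suc j)
  show ?case
  proof (cases "j = i")
    case True
    have "qc phi 1 (E b) (F i)" using Suc True by (intro rel_EF_ne) auto
    then show ?thesis using True by (simp add: Yl_base)
  next
    case False
    hence kl: "i < j" using Suc by simp
    have ih: "qc phi 1 (E b) (Yl j i)" using Suc.prems kl by (intro Suc.IH) auto
    have ke: "qc phi 1 (E b) (F j)" using Suc kl by (intro rel_EF_ne) auto
    have "qc phi 1 (E b) (- (F j * Yl j i) + phi vv * (Yl j i * F j))"
      by (rule qc_add_r[OF qc_neg_r[OF qc_cong[OF qc_mr[OF ke ih]]] qc_sc_r[OF qc_cong[OF qc_mr[OF ih ke]]]]) simp_all
    thus ?thesis by (simp add: Yl_step[OF kl])
  qed
qed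

lemma C4: "1 \<le> b \<Longrightarrow> b \<le> n - 1 \<Longrightarrow> 1 \<le> i \<Longrightarrow> i < j \<Longrightarrow> j \<le> n \<Longrightarrow> b + 1 < i \<or> j < b \<Longrightarrow> qc phi 1 (F b) (Yl j i)"
proof (induction j)
  case 0 then show ?case by simp
next
  case (Suc j)
  show ?case
  proof (cases "j = i")
    case True
    have "qc phi 1 (F b) (F i)" using Suc True by (intro rel_FF) auto
    then show ?thesis using True by (simp add: Yl_base)
  next
    case False
    hence kl: "i < j" using Suc by simp
    have ih: "qc phi 1 (F b) (Yl j i)" using Suc.prems kl by (intro Suc.IH) auto
    have ke: "qc phi 1 (F b) (F j)" using Suc kl by (intro rel_FF) auto
    have "qc phi 1 (F b) (- (F j * Yl j i) + phi vv * (Yl j i * F j))"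
      by (rule qc_add_r[OF qc_neg_r[OF qc_cong[OF qc_mr[OF ke ih]]] qc_sc_r[OF qc_cong[OF qc_mr[OF ih ke]]]]) simp_all
    thus ?thesis by (simp add: Yl_step[OF kl])
  qed
qed

lemma C5: "1 \<le> i \<Longrightarrow> i < j \<Longrightarrow> j \<le> k \<Longrightarrow> k < l \<Longrightarrow> l \<le> n \<Longrightarrow> qc phi 1 (Yl j i) (Xu k l)"
proof (induction j)
  case 0 then show ?case by simp
next
  case (Suc j)
  show ?case
  proof (cases "j = i")
    case True
    have "qc phi 1 (F i) (Xu k l)" using Suc True by (intro C1) auto
    then show ?thesis using True by (simp add: Yl_base)
  next
    case False
    hence kl: "i < j" using Suc by simp
    have ih: "qc phi 1 (Yl j i) (Xu k l)" using Suc.prems kl by (intro Suc.IH) auto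
    have ke: "qc phi 1 (F j) (Xu k l)" using Suc kl by (intro C1) auto
    have "qc phi 1 (- (F j * Yl j i) + phi vv * (Yl j i * F j)) (Xu k l)"
      by (rule qc_add_l[OF qc_neg_l[OF qc_cong[OF qc_ml[OF ke ih]]] qc_sc_l[OF qc_cong[OF qc_ml[OF ih ke]]]]) simp_all
    thus ?thesis by (simp add: Yl_step[OF kl])
  qed
qed

lemma G3:
  fixes x e f p q :: 'a
  assumes fx: "f * x = x * f" and ef: "e * f = f * e + phi s * (p - q)"
    and px: "p * x = phi c * (x * p)" and qx: "q * x = phi w * (x * q)"
  shows "(- (x * e) + phi c * (e * x)) * f - f * (- (x * e) + phi c * (e * x))
         = phi (s * c * c - s) * (x * p) + phi (s - s * c * w) * (x * q)"
proof -
  have fx2: "x * (f * z) = f * (x * z)" for z using fx by (metis mult.assoc)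
  have ef2: "e * (f * z) = f * (e * z) + phi s * (p * z - q * z)" for z using ef
    by (metis mult.assoc ring_distribs(2) left_diff_distrib)
  have px2: "p * (x * z) = phi c * (x * (p * z))" for z using px by (metis mult.assoc phi_cl2)
  have qx2: "q * (x * z) = phi w * (x * (q * z))" for z using qx by (metis mult.assoc phi_cl2)
  show ?thesis
    by (simp add: nsimps fx[symmetric] fx2 ef ef2 px qx px2 qx2 phi_diff)
qed

lemma U3: "1 \<le> k \<Longrightarrow> k < m \<Longrightarrow> Suc m \<le> n \<Longrightarrow>
  Xu k (Suc m) * F m - F m * Xu k (Suc m) = - (phi (inverse vv) * (Xu k m * (K m * Ki (Suc m))))"
proof -
  assume h: "1 \<le> k" "k < m" "Suc m \<le> n"
  have fx: "F m * Xu k m = Xu k m * F m" using qc_use[OF C1[of m k m]] h by simp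
  have ef: "E m * F m = F m * E m + phi (inverse (vv - inverse vv)) * (K m * Ki (m+1) - Ki m * K (m+1))"
    using rel_EF_eq[of m] h by (simp add: algebra_simps)
  have "qc phi (wX m k m * inverse (wX (Suc m) k m)) (K m * Ki (Suc m)) (Xu k m)"
    using h by (intro qc_ml KX KiX) auto
  hence px: "K m * Ki (m+1) * Xu k m = phi (inverse vv) * (Xu k m * (K m * Ki (m+1)))"
    using h by (simp add: wX_def qc_use)
  have "qc phi (inverse (wX m k m) * wX (Suc m) k m) (Ki m * K (Suc m)) (Xu k m)"
    using h by (intro qc_ml KX KiX) auto
  hence qx: "Ki m * K (m+1) * Xu k m = phi vv * (Xu k m * (Ki m * K (m+1)))"
    using h by (simp add: wX_def qc_use)
  have "Xu k (Suc m) * F m - F m * Xu k (Suc m) = phi (inverse (vv - inverse vv) * inverse vv * inverse vv - inverse (vv - inverse vv)) * (Xu k m * (K m * Ki (m+1)))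
     + phi (inverse (vv - inverse vv) - inverse (vv - inverse vv) * inverse vv * vv) * (Xu k m * (Ki m * K (m+1)))"
    unfolding Xu_step[OF h(2)] by (rule G3[OF fx ef px qx])
  also have "\<dots> = - (phi (inverse vv) * (Xu k m * (K m * Ki (Suc m))))"
    unfolding qv1 qv2 by (simp add: phi_uminus)
  finally show ?thesis .
qed

lemma G2:
  fixes x y e f p :: 'a
  assumes ef: "e * f = f * e" and yf: "y * f = f * y - phi c * (x * p)"
    and pe: "p * e = phi c * (e * p)" and xe: "x * e = e * x"
  shows "(- (y * e) + phi c * (e * y)) * f = f * (- (y * e) + phi c * (e * y))"
proof -
  have ef2: "e * (f * z) = f * (e * z)" for z using ef by (metis mult.assoc)
  have yf2: "y * (f * z) = f * (y * z) - phi c * (x * (p * z))" for z using yf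
    by (metis mult.assoc left_diff_distrib)
  have pe2: "p * (e * z) = phi c * (e * (p * z))" for z using pe by (metis mult.assoc phi_cl2)
  have xe2: "x * (e * z) = e * (x * z)" for z using xe by (metis mult.assoc)
  show ?thesis
    by (simp add: nsimps ef ef2 yf yf2 pe pe2 xe xe2)
qed

lemma U2: "1 \<le> k \<Longrightarrow> k < a \<Longrightarrow> a + 1 < l \<Longrightarrow> l \<le> n \<Longrightarrow> qc phi 1 (F a) (Xu k l)"
proof (induction l)
  case 0 then show ?case by simp
next
  case (Suc l)
  have kl: "k < l" using Suc by simp
  show ?case
  proof (cases "a + 1 = l")
    case False
    have ih: "qc phi 1 (F a) (Xu k l)" using Suc.prems kl False by (intro Suc.IH) auto
    have "qc phi 1 (E l) (F a)" using Suc kl by (intro rel_EF_ne) auto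
    from qc_sym[OF this] have ke: "qc phi 1 (F a) (E l)" by simp
    have "qc phi 1 (F a) (- (Xu k l * E l) + phi (inverse vv) * (E l * Xu k l))"
      by (rule qc_add_r[OF qc_neg_r[OF qc_cong[OF qc_mr[OF ih ke]]] qc_sc_r[OF qc_cong[OF qc_mr[OF ke ih]]]]) simp_all
    thus ?thesis by (simp add: Xu_step[OF kl])
  next
    case True
    have ef: "E l * F a = F a * E l" using qc_use[OF rel_EF_ne[of l a]] Suc True by simp
    have yf: "Xu k l * F a = F a * Xu k l - phi (inverse vv) * (Xu k a * (K a * Ki l))"
      using U3[of k a] Suc True by (simp add: algebra_simps)
    have "qc phi (vpair a l * inverse (vpair l l)) (K a * Ki l) (E l)"
      using Suc True by (intro qc_ml rel_KE qc_KiE) auto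
    hence pe: "K a * Ki l * E l = phi (inverse vv) * (E l * (K a * Ki l))"
      using True by (simp add: vpair_def qc_use)
    have xe: "Xu k a * E l = E l * Xu k a"
      using qc_use[OF C3[of l k a]] Suc True by simp
    have "(- (Xu k l * E l) + phi (inverse vv) * (E l * Xu k l)) * F a = F a * (- (Xu k l * E l) + phi (inverse vv) * (E l * Xu k l))"
      by (rule G2[OF ef yf pe xe])
    thus ?thesis by (simp add: Xu_step[OF kl] qc_def)
  qed
qed

lemma G4b:
  fixes e1 e2 f p q :: 'a
  assumes ef: "e1 * f = f * e1 + phi s * (p - q)" and e2f: "e2 * f = f * e2"
    and pe: "p * e2 = phi c * (e2 * p)" and qe: "q * e2 = phi w * (e2 * q)"
  shows "(- (e1 * e2) + phi c * (e2 * e1)) * f - f * (- (e1 * e2) + phi c * (e2 * e1))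
    = phi (s * w - s * c) * (e2 * q)"
proof -
  have ef2: "e1 * (f * z) = f * (e1 * z) + phi s * (p * z - q * z)" for z using ef
    by (metis mult.assoc ring_distribs(2) left_diff_distrib)
  have e2f2: "e2 * (f * z) = f * (e2 * z)" for z using e2f by (metis mult.assoc)
  have pe2: "p * (e2 * z) = phi c * (e2 * (p * z))" for z using pe by (metis mult.assoc phi_cl2)
  have qe2: "q * (e2 * z) = phi w * (e2 * (q * z))" for z using qe by (metis mult.assoc phi_cl2)
  show ?thesis
    by (simp add: nsimps ef ef2 e2f e2f2 pe pe2 qe qe2 phi_diff)
qed

lemma G4s:
  fixes x x' e f r :: 'a
  assumes xf: "x * f = f * x + x' * r" and ef: "e * f = f * e" and re: "r * e = e * r"
  shows "(- (x * e) + phi c * (e * x)) * f = f * (- (x * e) + phi c * (e * x)) + (- (x' * e) + phi c * (e * x')) * r"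
proof -
  have xf2: "x * (f * z) = f * (x * z) + x' * (r * z)" for z using xf
    by (metis mult.assoc ring_distribs(2))
  have ef2: "e * (f * z) = f * (e * z)" for z using ef by (metis mult.assoc)
  have re2: "r * (e * z) = e * (r * z)" for z using re by (metis mult.assoc)
  show ?thesis
    by (simp add: nsimps xf xf2 ef ef2 re re2)
qed

lemma U4: "1 \<le> k \<Longrightarrow> k + 1 < l \<Longrightarrow> l \<le> n \<Longrightarrow>
  Xu k l * F k - F k * Xu k l = Xu (k+1) l * (Ki k * K (k+1))"
proof (induction l)
  case 0 then show ?case by simp
next
  case (Suc l)
  have kl: "k < l" using Suc by simp
  show ?case
  proof (cases "l = k + 1")
    case True
    have ef: "E k * F k = F k * E k + phi (inverse (vv - inverse vv)) * (K k * Ki (k+1) - Ki k * K (k+1))"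
      using rel_EF_eq[of k] Suc by (simp add: algebra_simps)
    have e2f: "E (k+1) * F k = F k * E (k+1)" using qc_use[OF rel_EF_ne[of "k+1" k]] Suc True by simp
    have "qc phi (vpair k (k+1) * inverse (vpair (k+1) (k+1))) (K k * Ki (k+1)) (E (k+1))"
      using Suc True by (intro qc_ml rel_KE qc_KiE) auto
    hence pe: "K k * Ki (k+1) * E (k+1) = phi (inverse vv) * (E (k+1) * (K k * Ki (k+1)))"
      by (simp add: vpair_def qc_use)
    have "qc phi (inverse (vpair k (k+1)) * vpair (k+1) (k+1)) (Ki k * K (k+1)) (E (k+1))"
      using Suc True by (intro qc_ml rel_KE qc_KiE) auto
    hence qe: "Ki k * K (k+1) * E (k+1) = phi vv * (E (k+1) * (Ki k * K (k+1)))"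
      by (simp add: vpair_def qc_use)
    have x2: "Xu k (Suc l) = - (E k * E (k+1)) + phi (inverse vv) * (E (k+1) * E k)"
      using True by (simp add: Xu_step Xu_base)
    have "Xu k (Suc l) * F k - F k * Xu k (Suc l) = phi (inverse (vv - inverse vv) * vv - inverse (vv - inverse vv) * inverse vv) * (E (k+1) * (Ki k * K (k+1)))"
      unfolding x2 by (rule G4b[OF ef e2f pe qe])
    also have "\<dots> = Xu (k+1) (Suc l) * (Ki k * K (k+1))"
      unfolding qv3 using True by (simp add: Xu_base)
    finally show ?thesis .
  next
    case False
    hence kl2: "k + 1 < l" using Suc by simp
    have xf: "Xu k l * F k = F k * Xu k l + Xu (k+1) l * (Ki k * K (k+1))"
      using Suc.IH Suc.prems kl2 by (simp add: algebra_simps)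
    have ef: "E l * F k = F k * E l" using qc_use[OF rel_EF_ne[of l k]] Suc kl by simp
    have "qc phi (inverse (vpair k l) * vpair (k+1) l) (Ki k * K (k+1)) (E l)"
      using Suc kl2 by (intro qc_ml rel_KE qc_KiE) auto
    hence re: "Ki k * K (k+1) * E l = E l * (Ki k * K (k+1))"
      using kl2 by (simp add: vpair_def qc_use)
    have "Xu k (Suc l) * F k = F k * Xu k (Suc l) + Xu (k+1) (Suc l) * (Ki k * K (k+1))"
      unfolding Xu_step[OF kl] Xu_step[OF kl2] by (rule G4s[OF xf ef re])
    thus ?thesis by simp
  qed
qed

lemma GB:
  fixes f z x r x2 r2 :: 'a
  assumes fz: "f * z = z * f" and rf: "r * f = phi (inverse vv) * (f * r)"
    and xf: "x * f = f * x + x2 * r2" and fx0: "f * X = X * f"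
  shows "(- (f * y) + phi vv * (y * f)) * X - X * (- (f * y) + phi vv * (y * f))
     = - (f * (y * X - X * y)) + phi vv * ((y * X - X * y) * f)"
    and "- (f * (- (z * (x * r)))) + phi vv * ((- (z * (x * r))) * f) = - (z * (x2 * (r2 * r)))"
proof -
  have fx02: "f * (X * t) = X * (f * t)" for t using fx0 by (metis mult.assoc)
  show "(- (f * y) + phi vv * (y * f)) * X - X * (- (f * y) + phi vv * (y * f))
     = - (f * (y * X - X * y)) + phi vv * ((y * X - X * y) * f)"
    by (simp add: nsimps fx0 fx02)
  have fz2: "f * (z * t) = z * (f * t)" for t using fz by (metis mult.assoc)
  have rf2: "r * (f * t) = phi (inverse vv) * (f * (r * t))" for t using rf by (metis mult.assoc phi_cl2)
  have xf2: "x * (f * t) = f * (x * t) + x2 * (r2 * t)" for t using xf by (metis mult.assoc ring_distribs(2))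
  show "- (f * (- (z * (x * r)))) + phi vv * ((- (z * (x * r))) * f) = - (z * (x2 * (r2 * r)))"
    by (simp add: nsimps fz fz2 rf rf2 xf xf2)
qed

lemma GB0:
  fixes f y x x2 r :: 'a
  assumes yx: "y * x = x * y" and g: "f * x = x * f - x2 * r"
    and ry: "r * y = phi (inverse vv) * (y * r)" and yx2: "y * x2 = x2 * y"
  shows "(- (f * y) + phi vv * (y * f)) * x - x * (- (f * y) + phi vv * (y * f))
     = - (phi (vv - inverse vv) * (y * (x2 * r)))"
proof -
  have yx_2: "y * (x * t) = x * (y * t)" for t using yx by (metis mult.assoc)
  have g2: "f * (x * t) = x * (f * t) - x2 * (r * t)" for t using g by (metis mult.assoc left_diff_distrib)
  have ry2: "r * (y * t) = phi (inverse vv) * (y * (r * t))" for t using ry by (metis mult.assoc phi_cl2)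
  have yx22: "y * (x2 * t) = x2 * (y * t)" for t using yx2 by (metis mult.assoc)
  show ?thesis
    by (simp add: nsimps yx yx_2 g g2 ry ry2 yx2 yx22 phi_diff)
qed

lemma GC0:
  fixes f y e p q :: 'a
  assumes ye: "y * e = e * y" and ef: "e * f = f * e + phi s * (p - q)"
    and py: "p * y = phi vv * (y * p)" and qy: "q * y = phi (inverse vv) * (y * q)"
  shows "(- (f * y) + phi vv * (y * f)) * e - e * (- (f * y) + phi vv * (y * f))
     = phi (s * vv - s * inverse vv) * (y * q)"
proof -
  have ye2: "e * (y * t) = y * (e * t)" for t using ye by (metis mult.assoc)
  have ef2: "e * (f * t) = f * (e * t) + phi s * (p * t - q * t)" for t using ef
    by (metis mult.assoc ring_distribs(2) left_diff_distrib)
  have py2: "p * (y * t) = phi vv * (y * (p * t))" for t using py by (metis mult.assoc phi_cl2)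
  have qy2: "q * (y * t) = phi (inverse vv) * (y * (q * t))" for t using qy by (metis mult.assoc phi_cl2)
  show ?thesis
    by (simp add: nsimps ye[symmetric] ye2 ef ef2 py py2 qy qy2 phi_diff)
qed

lemma GC:
  fixes f y e z r x p q d :: 'a
  assumes fz: "f * z = z * f" and rf: "r * f = phi (inverse vv) * (f * r)"
    and ef: "e * f = f * e + phi s * (p - q)"
    and py: "p * y = phi vv * (y * p)" and yx: "y * x = x * y + d"
  shows "- (f * (- (z * (e * r)))) + phi vv * ((- (z * (e * r))) * f)
      - (phi (inverse vv) * (x * p)) * y + phi vv * (y * (phi (inverse vv) * (x * p)))
     = - (z * (phi s * ((p - q) * r))) + d * p"
proof -
  have fz2: "f * (z * t) = z * (f * t)" for t using fz by (metis mult.assoc)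
  have rf2: "r * (f * t) = phi (inverse vv) * (f * (r * t))" for t using rf by (metis mult.assoc phi_cl2)
  have ef2: "e * (f * t) = f * (e * t) + phi s * (p * t - q * t)" for t using ef
    by (metis mult.assoc ring_distribs(2) left_diff_distrib)
  have py2: "p * (y * t) = phi vv * (y * (p * t))" for t using py by (metis mult.assoc phi_cl2)
  have yx2: "y * (x * t) = x * (y * t) + d * t" for t using yx by (metis mult.assoc ring_distribs(2))
  show ?thesis
    by (simp add: nsimps fz fz2 rf rf2 ef ef2 py py2 yx yx2)
qed

lemma Kid1: "1 \<le> j \<Longrightarrow> j + 1 \<le> n \<Longrightarrow> 1 \<le> k \<Longrightarrow> k \<le> n \<Longrightarrow>
  Ki j * K (j+1) * (K j * Ki k) = K (j+1) * Ki k"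
proof -
  assume h: "1 \<le> j" "j + 1 \<le> n" "1 \<le> k" "k \<le> n"
  have c: "K (Suc j) * (K j * t) = K j * (K (Suc j) * t)" for t
    using qc_use2[OF rel_KK[of "j+1" j]] h by simp
  have "Ki j * K (j+1) * (K j * Ki k) = (Ki j * K j) * (K (j+1) * Ki k)"
    by (simp add: mult.assoc c)
  thus ?thesis using rel_KiK[of j] h by simp
qed

lemma MB:
  assumes h: "1 \<le> i" "i \<le> k" "k < l" "l \<le> n"
    and fz: "\<And>b. k < b \<Longrightarrow> b \<le> n - 1 \<Longrightarrow> F b * z = z * F b"
    and base: "k + 1 < l \<Longrightarrow> Yl (k+1) i * Xu k l - Xu k l * Yl (k+1) i = - (z * (Xu (k+1) l * (K (k+1) * Ki k)))"
  shows "k < j \<Longrightarrow> j < l \<Longrightarrow> Yl j i * Xu k l - Xu k l * Yl j i = - (z * (Xu j l * (K j * Ki k)))"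
proof (induction j)
  case 0 then show ?case by simp
next
  case (Suc j)
  show ?case
  proof (cases "j = k")
    case True then show ?thesis using base Suc.prems by simp
  next
    case False
    hence kj: "k < j" using Suc by simp
    have ij: "i < j" using kj h by simp
    have ih: "Yl j i * Xu k l - Xu k l * Yl j i = - (z * (Xu j l * (K j * Ki k)))"
      using Suc.IH kj Suc.prems by simp
    have fx0: "F j * Xu k l = Xu k l * F j" using qc_use[OF U2[of k j l]] h kj Suc.prems by simp
    have "qc phi (inverse (vpair j j) * vpair k j) (K j * Ki k) (F j)"
      using h kj Suc.prems by (intro qc_ml rel_KF qc_KiF) auto
    hence rf: "K j * Ki k * F j = phi (inverse vv) * (F j * (K j * Ki k))"
      using kj by (simp add: vpair_def qc_use)
    have xf: "Xu j l * F j = F j * Xu j l + Xu (j+1) l * (Ki j * K (j+1))"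
      using U4[of j l] h kj Suc.prems by (simp add: algebra_simps)
    have fzj: "F j * z = z * F j" using fz[of j] kj Suc.prems h by simp
    have "Yl (Suc j) i * Xu k l - Xu k l * Yl (Suc j) i
        = - (F j * (Yl j i * Xu k l - Xu k l * Yl j i)) + phi vv * ((Yl j i * Xu k l - Xu k l * Yl j i) * F j)"
      unfolding Yl_step[OF ij] by (rule GB(1)[OF fzj rf xf fx0])
    also have "\<dots> = - (z * (Xu (j+1) l * (Ki j * K (j+1) * (K j * Ki k))))"
      unfolding ih by (rule GB(2)[OF fzj rf xf fx0])
    also have "\<dots> = - (z * (Xu (Suc j) l * (K (Suc j) * Ki k)))"
      using Kid1[of j k] h kj Suc.prems by simp
    finally show ?thesis .
  qed
qed

lemma KiK_comm: "1 \<le> a \<Longrightarrow> a \<le> n \<Longrightarrow> 1 \<le> b \<Longrightarrow> b \<le> n \<Longrightarrow> Ki a * K b = K b * Ki a"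
  using qc_use[OF qc_KiK[of a b]] by simp

lemma MB2:
  assumes h: "1 \<le> k" "k < j" "j < l" "l \<le> n"
  shows "Yl j k * Xu k l - Xu k l * Yl j k = - (Xu j l * (K j * Ki k))"
proof -
  have "Yl j k * Xu k l - Xu k l * Yl j k = - (1 * (Xu j l * (K j * Ki k)))"
  proof (rule MB[of k k l 1 j])
    show "k + 1 < l \<Longrightarrow> Yl (k + 1) k * Xu k l - Xu k l * Yl (k + 1) k = - (1 * (Xu (k + 1) l * (K (k + 1) * Ki k)))"
      using U4[of k l] h KiK_comm[of k "k+1"] by (simp add: Yl_base) (metis minus_diff_eq)
  qed (use h in auto)
  thus ?thesis by simp
qed

lemma MB4:
  assumes h: "1 \<le> i" "i < k" "k < j" "j < l" "l \<le> n"
  shows "Yl j i * Xu k l - Xu k l * Yl j i = - (phi (vv - inverse vv) * Yl k i * (Xu j l * (K j * Ki k)))"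
proof (rule MB[of i k l "phi (vv - inverse vv) * Yl k i" j])
  show "F b * (phi (vv - inverse vv) * Yl k i) = phi (vv - inverse vv) * Yl k i * F b"
    if "k < b" "b \<le> n - 1" for b
    using qc_use[OF C4[of b i k]] h that by (simp add: nsimps)
  assume kl: "k + 1 < l"
  have yx: "Yl k i * Xu k l = Xu k l * Yl k i" using qc_use[OF C5[of i k k l]] h by simp
  have g: "F k * Xu k l = Xu k l * F k - Xu (k+1) l * (Ki k * K (k+1))"
    using U4[of k l] h kl by (simp add: algebra_simps)
  have "qc phi (inverse (wY k k i) * wY (k+1) k i) (Ki k * K (k+1)) (Yl k i)"
    using h kl by (intro qc_ml KiY KY) auto
  hence ry: "Ki k * K (k+1) * Yl k i = phi (inverse vv) * (Yl k i * (Ki k * K (k+1)))"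
    using h by (simp add: wY_def qc_use)
  have yx2: "Yl k i * Xu (k+1) l = Xu (k+1) l * Yl k i" using qc_use[OF C5[of i k "k+1" l]] h kl by simp
  have "Yl (k+1) i * Xu k l - Xu k l * Yl (k+1) i = - (phi (vv - inverse vv) * (Yl k i * (Xu (k+1) l * (Ki k * K (k+1)))))"
    using h by (simp only: Suc_eq_plus1[symmetric] Yl_step GB0[OF yx g ry yx2])
  thus "Yl (k+1) i * Xu k l - Xu k l * Yl (k+1) i = - (phi (vv - inverse vv) * Yl k i * (Xu (k+1) l * (K (k+1) * Ki k)))"
    using KiK_comm[of k "k+1"] h kl by (simp add: mult.assoc)
qed (use h in auto)

lemma GD:
  fixes f y X :: 'a
  shows "(- (f * y) + phi vv * (y * f)) * X - X * (- (f * y) + phi vv * (y * f))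
     = - (f * (y * X - X * y)) + phi vv * ((y * X - X * y) * f) - (f * X - X * f) * y + phi vv * (y * (f * X - X * f))"
  by (simp add: nsimps)

lemma phi_vs: "phi (vv - inverse vv) * (phi (inverse (vv - inverse vv)) * t) = t"
  using vv_inv_ne by (simp add: phi_mm)

lemma MC:
  assumes h: "1 \<le> i" "i \<le> k" "k < l" "l \<le> n"
  shows "Yl l i * Xu k l - Xu k l * Yl l i =
     (if i = k then phi (inverse (vv - inverse vv)) * (K l * Ki k - K k * Ki l) else Yl k i * (K l * Ki k))"
  using h
proof (induction l)
  case 0 then show ?case by simp
next
  case (Suc l)
  show ?case
  proof (cases "l = k")
    case True
    have ef: "E k * F k = F k * E k + phi (inverse (vv - inverse vv)) * (K k * Ki (k+1) - Ki k * K (k+1))"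
      using rel_EF_eq[of k] Suc by (simp add: algebra_simps)
    have cm: "Ki k * K (k+1) = K (k+1) * Ki k" using KiK_comm[of k "k+1"] Suc True by simp
    show ?thesis
    proof (cases "i = k")
      case True
      show ?thesis using ef cm \<open>l = k\<close> True by (simp add: Yl_base Xu_base algebra_simps)
    next
      case False
      hence ik: "i < k" using Suc by simp
      have ye: "Yl k i * E k = E k * Yl k i" using qc_use[OF C2[of k i k]] Suc True ik by simp
      have "qc phi (wY k k i * inverse (wY (k+1) k i)) (K k * Ki (k+1)) (Yl k i)"
        using Suc True ik by (intro qc_ml KiY KY) auto
      hence py: "K k * Ki (k+1) * Yl k i = phi vv * (Yl k i * (K k * Ki (k+1)))"
        using ik by (simp add: wY_def qc_use)
      have "qc phi (inverse (wY k k i) * wY (k+1) k i) (Ki k * K (k+1)) (Yl k i)"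
        using Suc True ik by (intro qc_ml KiY KY) auto
      hence qy: "Ki k * K (k+1) * Yl k i = phi (inverse vv) * (Yl k i * (Ki k * K (k+1)))"
        using ik by (simp add: wY_def qc_use)
      have "Yl (Suc k) i * Xu k (Suc k) - Xu k (Suc k) * Yl (Suc k) i
          = phi (inverse (vv - inverse vv) * vv - inverse (vv - inverse vv) * inverse vv) * (Yl k i * (Ki k * K (k+1)))"
        unfolding Yl_step[OF ik] Xu_base by (rule GC0[OF ye ef py qy])
      thus ?thesis using True False cm by (simp add: qv3)
    qed
  next
    case False
    hence kl: "k < l" using Suc by simp
    have il: "i < l" using kl Suc by simp
    have lSn: "Suc l \<le> n" using Suc by simp
    define Z where "Z = (if i = k then 1 else phi (vv - inverse vv) * Yl k i)"
    define d where "d = (if i = k then phi (inverse (vv - inverse vv)) * (K l * Ki k - K k * Ki l) else Yl k i * (K l * Ki k))"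
    define p where "p = K l * Ki (Suc l)"
    define q where "q = Ki l * K (Suc l)"
    define r where "r = K l * Ki k"
    have ih: "Yl l i * Xu k l = Xu k l * Yl l i + d"
      using Suc.IH[OF Suc.prems(1,2) kl] lSn unfolding d_def by (simp add: algebra_simps)
    have DL: "Yl l i * Xu k (Suc l) - Xu k (Suc l) * Yl l i = - (Z * (E l * r))"
    proof (cases "i = k")
      case True thus ?thesis using MB2[of k l "Suc l"] kl lSn Suc.prems unfolding Z_def r_def by (simp add: Xu_base)
    next
      case False thus ?thesis using MB4[of i k l "Suc l"] kl lSn Suc.prems unfolding Z_def r_def
        by (simp add: Xu_base mult.assoc)
    qed
    have G: "F l * Xu k (Suc l) - Xu k (Suc l) * F l = phi (inverse vv) * (Xu k l * p)"
      using U3[of k l] kl lSn Suc.prems unfolding p_def by (simp add: algebra_simps)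
    have fz: "F l * Z = Z * F l"
    proof (cases "i = k")
      case True thus ?thesis unfolding Z_def by simp
    next
      case False thus ?thesis unfolding Z_def
        using qc_use[OF C4[of l i k]] kl lSn Suc.prems by (simp add: nsimps)
    qed
    have "qc phi (inverse (vpair l l) * vpair k l) (K l * Ki k) (F l)"
      using kl lSn Suc.prems by (intro qc_ml rel_KF qc_KiF) auto
    hence rf: "r * F l = phi (inverse vv) * (F l * r)"
      using kl unfolding r_def by (simp add: vpair_def qc_use)
    have ef: "E l * F l = F l * E l + phi (inverse (vv - inverse vv)) * (p - q)"
      using rel_EF_eq[of l] kl lSn Suc.prems unfolding p_def q_def by (simp add: algebra_simps)
    have "qc phi (wY l l i * inverse (wY (Suc l) l i)) (K l * Ki (Suc l)) (Yl l i)"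
      using kl lSn Suc.prems il by (intro qc_ml KiY KY) auto
    hence py: "p * Yl l i = phi vv * (Yl l i * p)"
      using il unfolding p_def by (simp add: wY_def qc_use)
    have step: "Yl (Suc l) i * Xu k (Suc l) - Xu k (Suc l) * Yl (Suc l) i
       = - (Z * (phi (inverse (vv - inverse vv)) * ((p - q) * r))) + d * p"
      unfolding Yl_step[OF il] GD DL G by (rule GC[OF fz rf ef py ih])
    have KA: "r * p = p * r"
    proof -
      have a1: "Ki k * (K l * t) = K l * (Ki k * t)" for t
        using qc_use2[OF qc_KiK[of k l]] kl lSn Suc.prems by simp
      have a2: "Ki (Suc l) * (K l * t) = K l * (Ki (Suc l) * t)" for t
        using qc_use2[OF qc_KiK[of "Suc l" l]] kl lSn Suc.prems by simp
      have a3: "Ki (Suc l) * Ki k = Ki k * Ki (Suc l)"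
        using qc_use[OF qc_KiKi[of "Suc l" k]] kl lSn Suc.prems by simp
      show ?thesis unfolding r_def p_def by (simp add: mult.assoc a1 a2 a3)
    qed
    have KB: "q * r = K (Suc l) * Ki k"
      using Kid1[of l k] kl lSn Suc.prems unfolding q_def r_def by simp
    have "K k * Ki l * p = K k * (Ki l * K l) * Ki (Suc l)" unfolding p_def by (simp add: mult.assoc)
    hence KC: "K k * Ki l * p = K k * Ki (Suc l)"
      using rel_KiK[of l] kl lSn Suc.prems by simp
    show ?thesis
    proof (cases "i = k")
      case True
      have "- (Z * (phi (inverse (vv - inverse vv)) * ((p - q) * r))) + d * p
          = phi (inverse (vv - inverse vv)) * (q * r + (r * p - p * r) - K k * Ki l * p)"
        unfolding Z_def d_def r_def using True by (simp add: algebra_simps)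
      also have "\<dots> = phi (inverse (vv - inverse vv)) * (K (Suc l) * Ki k - K k * Ki (Suc l))"
        unfolding KA KB KC by simp
      finally show ?thesis using step True by simp
    next
      case False
      have zz: "Z * (phi (inverse (vv - inverse vv)) * t) = Yl k i * t" for t
        unfolding Z_def using False by (simp add: mult.assoc phi_cl2 phi_vs)
      have "- (Z * (phi (inverse (vv - inverse vv)) * ((p - q) * r))) + d * p
          = Yl k i * (q * r + (r * p - p * r))"
        unfolding zz d_def r_def using False by (simp add: algebra_simps)
      also have "\<dots> = Yl k i * (K (Suc l) * Ki k)"
        unfolding KA KB by simp
      finally show ?thesis using step False by simp
    qed
  qed
qed

lemma MD:
  assumes h: "1 \<le> i" "i < k" "k < l" "l < j" "j \<le> n"
  shows "Yl j i * Xu k l - Xu k l * Yl j i = 0"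
  using h
proof (induction j)
  case 0 then show ?case by simp
next
  case (Suc j)
  have ij: "i < j" using Suc by simp
  have g0: "F j * Xu k l - Xu k l * F j = 0"
    using qc_use[OF C1[of j k l]] Suc by simp
  have exp: "Yl (Suc j) i * Xu k l - Xu k l * Yl (Suc j) i
    = - (F j * (Yl j i * Xu k l - Xu k l * Yl j i)) + phi vv * ((Yl j i * Xu k l - Xu k l * Yl j i) * F j)"
    unfolding Yl_step[OF ij] GD g0 by simp
  show ?case
  proof (cases "j = l")
    case True
    have D: "Yl j i * Xu k l - Xu k l * Yl j i = Yl k i * (K l * Ki k)"
      using MC[of i k l] Suc True by simp
    have fy: "F l * (Yl k i * t) = Yl k i * (F l * t)" for t
      using qc_use2[OF C4[of l i k]] Suc True by simp
    have "qc phi (inverse (vpair l l) * vpair k l) (K l * Ki k) (F l)"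
      using Suc True by (intro qc_ml rel_KF qc_KiF) auto
    hence rf0: "K l * Ki k * F l = phi (inverse vv) * (F l * (K l * Ki k))"
      using Suc True by (simp add: vpair_def qc_use)
    hence rf: "K l * (Ki k * F l) = phi (inverse vv) * (F l * (K l * Ki k))"
      by (simp add: mult.assoc)
    show ?thesis unfolding exp D using True by (simp add: nsimps fy rf)
  next
    case False
    hence "Yl j i * Xu k l - Xu k l * Yl j i = 0" using Suc by simp
    thus ?thesis unfolding exp by simp
  qed
qed

end
theorem lemma2p9:
  fixes n i j k l :: nat
    and phi :: "Qv \<Rightarrow> 'a::ring_1"
    and K Ki Kb E Eb F Fb :: "nat \<Rightarrow> 'a"
  assumes alg: "Qv_algebra_hom phi"
    and rels: "qq_rels n phi K Ki Kb E Eb F Fb"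
    and idx: "1 \<le> i" "1 \<le> j" "1 \<le> k" "1 \<le> l" "i \<le> n" "j \<le> n" "k \<le> n" "l \<le> n"
    and ord: "i < j" "k < l" "i \<le> k"
  shows
   "((i < j \<and> j \<le> k \<and> k < l) \<or> (i < k \<and> k < l \<and> l < j) \<longrightarrow>
       Eroot phi E F j i * Eroot phi E F k l = Eroot phi E F k l * Eroot phi E F j i) \<and>
    (i = k \<and> k < j \<and> j < l \<longrightarrow>
       Eroot phi E F j i * Eroot phi E F k l =
         Eroot phi E F k l * Eroot phi E F j i - Eroot phi E F j l * K j * Ki i) \<and>
    (i < k \<and> k < j \<and> j = l \<longrightarrow>
       Eroot phi E F j i * Eroot phi E F k l =
         Eroot phi E F k l * Eroot phi E F j i + Eroot phi E F k i * K j * Ki k) \<and>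
    (i < k \<and> k < j \<and> j < l \<longrightarrow>
       Eroot phi E F j i * Eroot phi E F k l =
         Eroot phi E F k l * Eroot phi E F j i
         - phi (vv - inverse vv) * Eroot phi E F k i * Eroot phi E F j l * K j * Ki k) \<and>
    (i = k \<and> j = l \<longrightarrow>
       Eroot phi E F j i * Eroot phi E F k l =
         Eroot phi E F k l * Eroot phi E F j i
         + phi (inverse (vv - inverse vv)) * (K j * Ki i - K i * Ki j))"
proof -
  interpret qq n phi K Ki Kb E Eb F Fb using alg rels by unfold_locales
  have ER_up: "\<And>a b. a < b \<Longrightarrow> Eroot phi E F a b = Xu a b" by (simp add: Eroot_def Xu_def)
  have ER_low: "\<And>a b. b < a \<Longrightarrow> Eroot phi E F a b = Yl a b" by (simp add: Eroot_def Yl_def)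
  have deq: "\<And>A B C::'a. A - B = C \<Longrightarrow> A = B + C" by (simp add: algebra_simps)
  show ?thesis
  proof (intro conjI impI)
    assume a: "(i < j \<and> j \<le> k \<and> k < l) \<or> (i < k \<and> k < l \<and> l < j)"
    show "Eroot phi E F j i * Eroot phi E F k l = Eroot phi E F k l * Eroot phi E F j i"
    proof (cases "j \<le> k")
      case True
      thus ?thesis using qc_use[OF C5[of i j k l]] idx ord ER_up ER_low by simp
    next
      case False
      hence "i < k" "l < j" using a by auto
      thus ?thesis using deq[OF MD[of i k l j]] idx ord ER_up ER_low by simp
    qed
  next
    assume a: "i = k \<and> k < j \<and> j < l"
    show "Eroot phi E F j i * Eroot phi E F k l =
         Eroot phi E F k l * Eroot phi E F j i - Eroot phi E F j l * K j * Ki i"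
      using deq[OF MB2[of k j l]] a idx ord ER_up ER_low by (simp add: mult.assoc)
  next
    assume a: "i < k \<and> k < j \<and> j = l"
    show "Eroot phi E F j i * Eroot phi E F k l =
         Eroot phi E F k l * Eroot phi E F j i + Eroot phi E F k i * K j * Ki k"
      using deq[OF MC[of i k l]] a idx ord ER_up ER_low by (simp add: mult.assoc)
  next
    assume a: "i < k \<and> k < j \<and> j < l"
    show "Eroot phi E F j i * Eroot phi E F k l =
         Eroot phi E F k l * Eroot phi E F j i
         - phi (vv - inverse vv) * Eroot phi E F k i * Eroot phi E F j l * K j * Ki k"
      using deq[OF MB4[of i k j l]] a idx ord ER_up ER_low by (simp add: mult.assoc)
  next
    assume a: "i = k \<and> j = l"
    show "Eroot phi E F j i * Eroot phi E F k l =
         Eroot phi E F k l * Eroot phi E F j i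
         + phi (inverse (vv - inverse vv)) * (K j * Ki i - K i * Ki j)"
      using deq[OF MC[of i k l]] a idx ord ER_up ER_low by simp
  qed
qed

end
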